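(* Let $(\mathcal A,\gamma,\phi)$ be a $\mathbb Z_2$-graded noncommutative probability space and let $\mathcal U$ be the infinite graded tensor product of copies of $(\mathcal A,\gamma,\phi)$, with product functional $\tilde\phi$ and with $X^{(k)}$ denoting the image of $X\in\mathcal A$ in the $k$-th tensor factor $\mathcal A_k$. Then the algebras $(\mathcal A_k)_{k\in\mathbb N}$ are interchangeable: for all $X_1,\dots,X_n\in\mathcal A$, all indices $i_1,\dots,i_n\in\mathbb N$ and every bijection $\sigma$ of $\mathbb N$, $\tilde\phi(X_1^{(i_1)}\cdots X_n^{(i_n)})=\tilde\phi(X_1^{(\sigma(i_1))}\cdots X_n^{(\sigma(i_n))})$.
   Context: A $\mathbb Z_2$-graded noncommutative probability space $(\mathcal A,\gamma,\phi)$ consists of a complex unital algebra $\mathcal A=\mathcal A_+\oplus\mathcal A_-$ graded by an algebra automorphism $\gamma$ of order 2 ($\mathcal A_\pm=\{X:\gamma(X)=\pm X\}$) and a unital linear functional $\phi$ with $\phi\circ\gamma=\phi$. Homogeneous elements have degree $\partial X=0$ for $X\in\mathcal A_+$, $\partial X=1$ for $X\in\mathcal A_-$. The graded tensor product $\mathcal A_1\otimes_2\mathcal A_2$ of graded algebras is the vector space tensor product with multiplication $(X_1\otimes X_2)(X_1'\otimes X_2')=(-1)^{\partial X_2\,\partial X_1'}X_1X_1'\otimes X_2X_2'$ for homogeneous elements, extended bilinearly, grading $\gamma_1\otimes\gamma_2$, and functional $\phi_1\otimes\phi_2$; it is associative. The infinite graded tensor product is the union (inductive limit) of the finite graded tensor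 products $\mathcal A^{\otimes_2 N}$ under $x\mapsto x\otimes1$, with $\tilde\phi$ the product functional, and $X^{(k)}=1\otimes\cdots\otimes1\otimes X\otimes1\otimes\cdots$ ($X$ in position $k$). *)

theory Defs
  imports Complex_Main
begin

definition cplx_algebra :: "(complex \<Rightarrow> 'a::ring_1 \<Rightarrow> 'a) \<Rightarrow> bool" where
  "cplx_algebra sc \<longleftrightarrow> module sc \<and>
     (\<forall>c x y. sc c (x * y) = sc c x * y \<and> sc c (x * y) = x * sc c y)"

definition alg_hom :: "(complex \<Rightarrow> 'a::ring_1 \<Rightarrow> 'a) \<Rightarrow> (complex \<Rightarrow> 'b::ring_1 \<Rightarrow> 'b)
    \<Rightarrow> ('a \<Rightarrow> 'b) \<Rightarrow> bool" where
  "alg_hom sa sb f \<longleftrightarrow> Vector_Spaces.linear sa sb f \<and> f 1 = 1 \<and> (\<forall>x y. f (x * y) = f x * f y)"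

definition grading :: "(complex \<Rightarrow> 'a::ring_1 \<Rightarrow> 'a) \<Rightarrow> ('a \<Rightarrow> 'a) \<Rightarrow> bool" where
  "grading sa \<gamma> \<longleftrightarrow> alg_hom sa sa \<gamma> \<and> (\<forall>x. \<gamma> (\<gamma> x) = x)"

definition even_elt :: "('a \<Rightarrow> 'a) \<Rightarrow> 'a \<Rightarrow> bool" where
  "even_elt \<gamma> x \<longleftrightarrow> \<gamma> x = x"

definition odd_elt :: "('a \<Rightarrow> 'a::ab_group_add) \<Rightarrow> 'a \<Rightarrow> bool" where
  "odd_elt \<gamma> x \<longleftrightarrow> \<gamma> x = - x"

definition graded_ncps :: "(complex \<Rightarrow> 'a::ring_1 \<Rightarrow> 'a) \<Rightarrow> ('a \<Rightarrow> 'a) \<Rightarrow> ('a \<Rightarrow> complex) \<Rightarrow> bool" where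
  "graded_ncps sa \<gamma> \<phi> \<longleftrightarrow> cplx_algebra sa \<and> grading sa \<gamma> \<and>
     Vector_Spaces.linear sa (*) \<phi> \<and> \<phi> 1 = 1 \<and> (\<forall>x. \<phi> (\<gamma> x) = \<phi> x)"

text \<open>Ordered product  X_0^{(0)} X_1^{(1)} ... X_{N-1}^{(N-1)}  which equals the elementary
  tensor X_0 \<otimes> ... \<otimes> X_{N-1} \<otimes> 1 \<otimes> ... in the graded tensor product.\<close>
definition ordered_prod :: "(nat \<Rightarrow> 'a \<Rightarrow> 'u::monoid_mult) \<Rightarrow> nat \<Rightarrow> (nat \<Rightarrow> 'a) \<Rightarrow> 'u" where
  "ordered_prod \<iota> N x = prod_list (map (\<lambda>k. \<iota> k (x k)) [0..<N])"

text \<open>(U, gammaU, psi, iota) is (a model of) the infinite graded tensor product of copies of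
  (A, gamma, phi): iota k X = X^{(k)} embeds A as the k-th factor, elementary tensors span U,
  factors in different positions graded-commute, the grading is the product grading and the
  functional is the product functional on elementary tensors.\<close>
definition inf_graded_tensor_product ::
  "(complex \<Rightarrow> 'a::ring_1 \<Rightarrow> 'a) \<Rightarrow> ('a \<Rightarrow> 'a) \<Rightarrow> ('a \<Rightarrow> complex) \<Rightarrow>
   (complex \<Rightarrow> 'u::ring_1 \<Rightarrow> 'u) \<Rightarrow> ('u \<Rightarrow> 'u) \<Rightarrow> ('u \<Rightarrow> complex) \<Rightarrow> (nat \<Rightarrow> 'a \<Rightarrow> 'u) \<Rightarrow> bool" where
  "inf_graded_tensor_product sa \<gamma> \<phi> su \<gamma>u \<psi> \<iota> \<longleftrightarrow>
     cplx_algebra su \<and> grading su \<gamma>u \<and>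
     Vector_Spaces.linear su (*) \<psi> \<and> \<psi> 1 = 1 \<and> (\<forall>u. \<psi> (\<gamma>u u) = \<psi> u) \<and>
     (\<forall>k. alg_hom sa su (\<iota> k)) \<and>
     (\<forall>k x. \<gamma>u (\<iota> k x) = \<iota> k (\<gamma> x)) \<and>
     (\<forall>j k x y. j \<noteq> k \<longrightarrow> (even_elt \<gamma> x \<or> even_elt \<gamma> y) \<longrightarrow> \<iota> j x * \<iota> k y = \<iota> k y * \<iota> j x) \<and>
     (\<forall>j k x y. j \<noteq> k \<longrightarrow> odd_elt \<gamma> x \<longrightarrow> odd_elt \<gamma> y \<longrightarrow> \<iota> j x * \<iota> k y = - (\<iota> k y * \<iota> j x)) \<and>
     (\<forall>N x. \<psi> (ordered_prod \<iota> N x) = (\<Prod>k<N. \<phi> (x k))) \<and>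
     (\<forall>u. \<exists>N. u \<in> module.span su {ordered_prod \<iota> N x | x. True})"

end

theory Submission
  imports Defs "HOL-Library.Multiset"
begin

definition Pw :: "(nat \<Rightarrow> 'a \<Rightarrow> 'u::monoid_mult) \<Rightarrow> (nat \<times> 'a \<times> bool) list \<Rightarrow> 'u" where
  "Pw f w = prod_list (map (\<lambda>c. f (fst c) (fst (snd c))) w)"

lemma Pw_simps[simp]: "Pw f [] = 1" "Pw f (c # w) = f (fst c) (fst (snd c)) * Pw f w"
  "Pw f (v @ w) = Pw f v * Pw f w"
  by (simp_all add: Pw_def)

definition homl :: "('a \<Rightarrow> 'a::ab_group_add) \<Rightarrow> nat \<times> 'a \<times> bool \<Rightarrow> bool" where
  "homl \<gamma> c = (if snd (snd c) then odd_elt \<gamma> (fst (snd c)) else even_elt \<gamma> (fst (snd c)))"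

definition CC :: "('a \<Rightarrow> 'a::ab_group_add) \<Rightarrow> (nat \<Rightarrow> 'a \<Rightarrow> 'u::ring_1) \<Rightarrow> bool" where
  "CC \<gamma> f \<longleftrightarrow> (\<forall>c d. fst c \<noteq> fst d \<longrightarrow> homl \<gamma> c \<longrightarrow> homl \<gamma> d \<longrightarrow>
     f (fst c) (fst (snd c)) * f (fst d) (fst (snd d)) =
     (if snd (snd c) \<and> snd (snd d) then -1 else 1) * (f (fst d) (fst (snd d)) * f (fst c) (fst (snd c))))"

definition sgnok :: "'u::ring_1 \<Rightarrow> (nat \<times> 'a \<times> bool) list \<Rightarrow> bool" where
  "sgnok s w \<longleftrightarrow> s = 1 \<or> (s = -1 \<and> (\<exists>c\<in>set w. snd (snd c)))"

lemma sgnok_central: "sgnok s w \<Longrightarrow> s * u = u * s" by (auto simp: sgnok_def)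

lemma ins_lemma:
  fixes f g :: "nat \<Rightarrow> 'a::ab_group_add \<Rightarrow> 'u::ring_1"
  assumes "CC \<gamma> f" "CC \<gamma> g" "homl \<gamma> a" "\<forall>c\<in>set v. homl \<gamma> c"
  shows "\<exists>s. sgnok s (a # v) \<and> Pw f (a # v) = s * Pw f (insort_key fst a v)
             \<and> Pw g (a # v) = s * Pw g (insort_key fst a v)"
  using assms(4)
proof (induction v)
  case Nil
  then show ?case by (auto simp: sgnok_def intro!: exI[of _ 1])
next
  case (Cons c v)
  show ?case
  proof (cases "fst a \<le> fst c")
    case True
    then show ?thesis by (auto simp: sgnok_def intro!: exI[of _ 1])
  next
    case False
    from Cons obtain s where s: "sgnok s (a # v)" "Pw f (a # v) = s * Pw f (insort_key fst a v)"
      "Pw g (a # v) = s * Pw g (insort_key fst a v)" by auto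
    define e :: 'u where "e = (if snd (snd a) \<and> snd (snd c) then -1 else 1)"
    have hc: "homl \<gamma> c" using Cons.prems by auto
    have ne: "fst a \<noteq> fst c" using False by auto
    have cf: "f (fst a) (fst (snd a)) * f (fst c) (fst (snd c)) = e * (f (fst c) (fst (snd c)) * f (fst a) (fst (snd a)))"
      using assms(1) ne assms(3) hc unfolding CC_def e_def by blast
    have cg: "g (fst a) (fst (snd a)) * g (fst c) (fst (snd c)) = e * (g (fst c) (fst (snd c)) * g (fst a) (fst (snd a)))"
      using assms(2) ne assms(3) hc unfolding CC_def e_def by blast
    have se: "sgnok e (a # c # v)" by (auto simp: sgnok_def e_def)
    have ss: "sgnok s (a # c # v)" using s(1) by (auto simp: sgnok_def)
    have es: "sgnok (e * s) (a # c # v)" using se ss by (auto simp: sgnok_def)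
    have ins: "insort_key fst a (c # v) = c # insort_key fst a v" using False by simp
    have gen: "\<And>h :: nat \<Rightarrow> 'a \<Rightarrow> 'u. h (fst a) (fst (snd a)) * h (fst c) (fst (snd c)) = e * (h (fst c) (fst (snd c)) * h (fst a) (fst (snd a)))
       \<Longrightarrow> Pw h (a # v) = s * Pw h (insort_key fst a v)
       \<Longrightarrow> Pw h (a # c # v) = (e * s) * Pw h (insort_key fst a (c # v))"
    proof -
      fix h :: "nat \<Rightarrow> 'a \<Rightarrow> 'u"
      assume h1: "h (fst a) (fst (snd a)) * h (fst c) (fst (snd c)) = e * (h (fst c) (fst (snd c)) * h (fst a) (fst (snd a)))"
        and h2: "Pw h (a # v) = s * Pw h (insort_key fst a v)"
      have "Pw h (a # c # v) = (h (fst a) (fst (snd a)) * h (fst c) (fst (snd c))) * Pw h v"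
        by (simp add: mult.assoc)
      also have "\<dots> = e * (h (fst c) (fst (snd c)) * Pw h (a # v))"
        by (simp add: h1 mult.assoc)
      also have "\<dots> = e * (h (fst c) (fst (snd c)) * s * Pw h (insort_key fst a v))"
        using h2 by (simp add: mult.assoc)
      also have "\<dots> = e * (s * h (fst c) (fst (snd c)) * Pw h (insort_key fst a v))"
        using sgnok_central[OF s(1)] by metis
      also have "\<dots> = (e * s) * Pw h (insort_key fst a (c # v))"
        unfolding ins by (simp add: mult.assoc)
      finally show "Pw h (a # c # v) = (e * s) * Pw h (insort_key fst a (c # v))" .
    qed
    show ?thesis using gen[OF cf s(2)] gen[OF cg s(3)] es by blast
  qed
qed

lemma sort_lemma:
  fixes f g :: "nat \<Rightarrow> 'a::ab_group_add \<Rightarrow> 'u::ring_1"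
  assumes "CC \<gamma> f" "CC \<gamma> g" "\<forall>c\<in>set w. homl \<gamma> c"
  shows "\<exists>s. sgnok s w \<and> Pw f w = s * Pw f (sort_key fst w)
             \<and> Pw g w = s * Pw g (sort_key fst w)"
  using assms(3)
proof (induction w)
  case Nil
  then show ?case by (auto simp: sgnok_def intro!: exI[of _ 1])
next
  case (Cons a w)
  from Cons obtain s1 where s1: "sgnok s1 w" "Pw f w = s1 * Pw f (sort_key fst w)"
      "Pw g w = s1 * Pw g (sort_key fst w)" by auto
  from ins_lemma[OF assms(1,2), of a "sort_key fst w"] Cons.prems obtain s2 where
    s2: "sgnok s2 (a # sort_key fst w)" "Pw f (a # sort_key fst w) = s2 * Pw f (sort_key fst (a # w))"
      "Pw g (a # sort_key fst w) = s2 * Pw g (sort_key fst (a # w))" by auto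
  have ok: "sgnok (s1 * s2) (a # w)" using s1(1) s2(1) by (auto simp: sgnok_def)
  have gen: "\<And>h :: nat \<Rightarrow> 'a \<Rightarrow> 'u. Pw h w = s1 * Pw h (sort_key fst w)
     \<Longrightarrow> Pw h (a # sort_key fst w) = s2 * Pw h (sort_key fst (a # w))
     \<Longrightarrow> Pw h (a # w) = (s1 * s2) * Pw h (sort_key fst (a # w))"
  proof -
    fix h :: "nat \<Rightarrow> 'a \<Rightarrow> 'u"
    assume h1: "Pw h w = s1 * Pw h (sort_key fst w)"
      and h2: "Pw h (a # sort_key fst w) = s2 * Pw h (sort_key fst (a # w))"
    have "Pw h (a # w) = h (fst a) (fst (snd a)) * s1 * Pw h (sort_key fst w)"
      by (simp add: h1 mult.assoc)
    also have "\<dots> = s1 * Pw h (a # sort_key fst w)"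
      using sgnok_central[OF s1(1)] by (metis Pw_simps(2) mult.assoc)
    also have "\<dots> = (s1 * s2) * Pw h (sort_key fst (a # w))"
      using h2 by (simp add: mult.assoc)
    finally show "Pw h (a # w) = (s1 * s2) * Pw h (sort_key fst (a # w))" .
  qed
  show ?case using gen[OF s1(2) s2(2)] gen[OF s1(3) s2(3)] ok by blast
qed


fun xf :: "(nat \<times> 'a \<times> bool) list \<Rightarrow> nat \<Rightarrow> 'a::one" where
  "xf [] = (\<lambda>_. 1)" | "xf (c # v) = (xf v)(fst c := fst (snd c))"

lemma xf_out: "k \<notin> fst ` set v \<Longrightarrow> xf v k = 1" by (induction v) auto

lemma prod_ones: "(\<forall>j<k. h j = 1) \<Longrightarrow> prod_list (map h [0..<k]) = (1::'u::monoid_mult)"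
  by (induction k) auto

lemma sorted_prod:
  fixes \<iota> :: "nat \<Rightarrow> 'a::ring_1 \<Rightarrow> 'u::ring_1"
  assumes one: "\<forall>k. \<iota> k 1 = 1" and "sorted_wrt (<) (map fst v)" and "\<forall>c\<in>set v. fst c < N"
  shows "Pw \<iota> v = ordered_prod \<iota> N (xf v)"
  using assms(2,3)
proof (induction v)
  case Nil
  then show ?case by (simp add: ordered_prod_def one prod_ones)
next
  case (Cons c v)
  obtain k y b where c: "c = (k, y, b)" by (cases c) auto
  have kN: "k < N" using Cons.prems c by auto
  have gt: "\<forall>d\<in>set v. k < fst d" using Cons.prems(1) c by auto
  have IH: "Pw \<iota> v = ordered_prod \<iota> N (xf v)" using Cons by auto
  have split: "[0..<N] = [0..<k] @ k # [Suc k..<N]" using kN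
    using upt_add_eq_append[of 0 k "N - k"] upt_conv_Cons[of k N] by simp
  define h where "h = (\<lambda>j. \<iota> j (xf (c # v) j))"
  define h' where "h' = (\<lambda>j. \<iota> j (xf v j))"
  have out: "\<And>j. j \<le> k \<Longrightarrow> xf v j = 1" using gt by (intro xf_out) force
  have h1: "prod_list (map h [0..<k]) = 1"
    by (rule prod_ones) (auto simp: h_def c out one)
  have h'1: "prod_list (map h' [0..<k]) = 1"
    by (rule prod_ones) (auto simp: h'_def c out one)
  have hk: "h k = \<iota> k y" by (simp add: h_def c)
  have h'k: "h' k = 1" by (simp add: h'_def out one)
  have eqm: "map h [Suc k..<N] = map h' [Suc k..<N]"
    by (rule map_cong) (auto simp: h_def h'_def c)
  have "ordered_prod \<iota> N (xf (c # v)) = prod_list (map h [0..<k]) * (h k * prod_list (map h [Suc k..<N]))"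
    unfolding ordered_prod_def h_def[symmetric] split by simp
  also have "\<dots> = \<iota> k y * prod_list (map h' [Suc k..<N])"
    by (simp only: h1 hk eqm mult_1_left)
  finally have e1: "ordered_prod \<iota> N (xf (c # v)) = \<iota> k y * prod_list (map h' [Suc k..<N])" .
  have e2: "ordered_prod \<iota> N (xf v) = prod_list (map h' [Suc k..<N])"
    unfolding ordered_prod_def h'_def[symmetric] split using h'1 h'k by simp
  show ?case unfolding e1 using IH e2 c by simp
qed

lemma phi_prod:
  fixes \<phi> :: "'a::one \<Rightarrow> 'c::comm_monoid_mult"
  assumes "\<phi> 1 = 1" "distinct (map fst v)" "fst ` set v \<subseteq> A" "finite A"
  shows "(\<Prod>k\<in>A. \<phi> (xf v k)) = prod_list (map (\<lambda>c. \<phi> (fst (snd c))) v)"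
  using assms(2-4)
proof (induction v arbitrary: A)
  case Nil
  then show ?case by (simp add: assms(1))
next
  case (Cons c v)
  have kA: "fst c \<in> A" using Cons.prems(2) by simp
  have nk: "fst c \<notin> fst ` set v" using Cons.prems(1) by simp
  define g where "g = (\<lambda>k. \<phi> (xf (c # v) k))"
  have sv: "fst ` set v \<subseteq> A" using Cons.prems(2) by simp
  have sv2: "fst ` set v \<subseteq> A - {fst c}" using sv nk by blast
  have r1: "(\<Prod>k\<in>A. g k) = g (fst c) * (\<Prod>k\<in>A - {fst c}. g k)"
    by (rule prod.remove[OF Cons.prems(3) kA])
  have r2: "g (fst c) = \<phi> (fst (snd c))" by (simp add: g_def)
  have r3: "(\<Prod>k\<in>A - {fst c}. g k) = (\<Prod>k\<in>A - {fst c}. \<phi> (xf v k))"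
    by (rule prod.cong) (auto simp: g_def)
  have d: "distinct (map fst v)" using Cons.prems(1) by simp
  have f: "finite (A - {fst c})" using Cons.prems(3) by simp
  have r4: "(\<Prod>k\<in>A - {fst c}. \<phi> (xf v k)) = prod_list (map (\<lambda>c. \<phi> (fst (snd c))) v)"
    by (rule Cons.IH[OF d sv2 f])
  have "(\<Prod>k\<in>A. g k) = prod_list (map (\<lambda>c. \<phi> (fst (snd c))) (c # v))"
    unfolding r1 r2 r3 r4 by simp
  then show ?case by (simp only: g_def)
qed

lemma L1:
  fixes \<iota> :: "nat \<Rightarrow> 'a::ring_1 \<Rightarrow> 'u::ring_1" and \<psi> :: "'u \<Rightarrow> complex" and \<phi> :: "'a \<Rightarrow> complex"
  assumes cc: "CC \<gamma> \<iota>" and one: "\<forall>k. \<iota> k 1 = 1"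
    and op: "\<forall>N x. \<psi> (ordered_prod \<iota> N x) = (\<Prod>k<N. \<phi> (x k))"
    and neg: "\<forall>u. \<psi> (- u) = - \<psi> u" and p1: "\<phi> 1 = 1"
    and podd: "\<forall>x. odd_elt \<gamma> x \<longrightarrow> \<phi> x = 0"
    and dis: "distinct (map fst v)" and hom: "\<forall>c\<in>set v. homl \<gamma> c"
  shows "\<psi> (Pw \<iota> v) = prod_list (map (\<lambda>c. \<phi> (fst (snd c))) v)"
proof -
  obtain s where s: "sgnok s v" "Pw \<iota> v = s * Pw \<iota> (sort_key fst v)"
    using sort_lemma[OF cc cc hom] by blast
  define u where "u = sort_key fst v"
  have mu: "mset u = mset v" by (simp add: u_def)
  have "mset (map fst u) = mset (map fst v)" using mu by simp
  then have du: "distinct (map fst u)" using dis mset_eq_imp_distinct_iff by blast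
  have su: "sorted_wrt (<) (map fst u)"
    using du by (simp add: strict_sorted_iff u_def sorted_sort_key)
  define N where "N = Suc (Max (fst ` set u))"
  have lt: "\<forall>c\<in>set u. fst c < N" unfolding N_def
    by (auto intro!: le_imp_less_Suc Max_ge)
  have "\<psi> (Pw \<iota> u) = (\<Prod>k<N. \<phi> (xf u k))"
    using sorted_prod[of \<iota> u N, OF one su lt] op by simp
  also have "\<dots> = prod_list (map (\<lambda>c. \<phi> (fst (snd c))) u)"
    using lt by (intro phi_prod p1 du) auto
  also have "\<dots> = prod_mset (mset (map (\<lambda>c. \<phi> (fst (snd c))) u))"
    by (simp only: prod_mset_prod_list)
  also have "\<dots> = prod_mset (mset (map (\<lambda>c. \<phi> (fst (snd c))) v))"
    by (simp only: mset_map mu)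
  also have "\<dots> = prod_list (map (\<lambda>c. \<phi> (fst (snd c))) v)"
    by (simp only: prod_mset_prod_list)
  finally have eq: "\<psi> (Pw \<iota> u) = prod_list (map (\<lambda>c. \<phi> (fst (snd c))) v)" .
  show ?thesis
  proof (cases "s = 1")
    case True
    then show ?thesis using s eq u_def by simp
  next
    case False
    then obtain c where c: "c \<in> set v" "snd (snd c)" "s = -1" using s(1) by (auto simp: sgnok_def)
    have "\<phi> (fst (snd c)) = 0" using hom c podd by (auto simp: homl_def)
    then have "prod_list (map (\<lambda>c. \<phi> (fst (snd c))) v) = 0"
      using c(1) by (auto simp: prod_list_zero_iff)
    then show ?thesis using s eq u_def c neg by simp
  qed
qed


lemma adj: "sorted (map f v) \<Longrightarrow> \<not> distinct (map f v) \<Longrightarrow> \<exists>j. Suc j < length v \<and> f (v ! j) = f (v ! Suc j)"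
proof (induction v)
  case Nil
  then show ?case by simp
next
  case (Cons a v)
  show ?case
  proof (cases v)
    case Nil
    then show ?thesis using Cons.prems by simp
  next
    case (Cons b rest)
    show ?thesis
    proof (cases "f a = f b")
      case True
      then show ?thesis using Cons by auto
    next
      case False
      have s: "sorted (map f v)" using Cons.prems(1) by simp
      have lt: "\<forall>c\<in>set v. f a < f c" using Cons.prems(1) False \<open>v = b # rest\<close> by auto
      then have "f a \<notin> set (map f v)" by auto
      then have "\<not> distinct (map f v)" using Cons.prems(2) by simp
      then obtain j where "Suc j < length v" "f (v ! j) = f (v ! Suc j)" using Cons.IH s by blast
      then show ?thesis by (intro exI[of _ "Suc j"]) simp
    qed
  qed
qed

lemma Pw_map: "Pw (\<lambda>k. f (\<sigma> k)) w = Pw f (map (\<lambda>c. (\<sigma> (fst c), snd c)) w)"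
  by (induction w) auto

lemma H:
  fixes \<iota> :: "nat \<Rightarrow> 'a::ring_1 \<Rightarrow> 'u::ring_1" and \<psi> :: "'u \<Rightarrow> complex" and \<phi> :: "'a \<Rightarrow> complex"
    and \<sigma> :: "nat \<Rightarrow> nat"
  assumes cc: "CC \<gamma> \<iota>" and cc2: "CC \<gamma> (\<lambda>k. \<iota> (\<sigma> k))" and one: "\<forall>k. \<iota> k 1 = 1"
    and op: "\<forall>N x. \<psi> (ordered_prod \<iota> N x) = (\<Prod>k<N. \<phi> (x k))"
    and neg: "\<forall>u. \<psi> (- u) = - \<psi> u" and p1: "\<phi> 1 = 1"
    and podd: "\<forall>x. odd_elt \<gamma> x \<longrightarrow> \<phi> x = 0"
    and inj: "inj \<sigma>"
    and mult: "\<forall>k x y. \<iota> k (x * y) = \<iota> k x * \<iota> k y"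
    and gmul: "\<forall>x y. \<gamma> (x * y) = \<gamma> x * \<gamma> y"
  shows "\<forall>c\<in>set w. homl \<gamma> c \<Longrightarrow> \<psi> (Pw \<iota> w) = \<psi> (Pw (\<lambda>k. \<iota> (\<sigma> k)) w)"
proof (induction "length w" arbitrary: w rule: less_induct)
  case less
  obtain s where s: "sgnok s w" "Pw \<iota> w = s * Pw \<iota> (sort_key fst w)"
     "Pw (\<lambda>k. \<iota> (\<sigma> k)) w = s * Pw (\<lambda>k. \<iota> (\<sigma> k)) (sort_key fst w)"
    using sort_lemma[OF cc cc2 less.prems] by blast
  define v where "v = sort_key fst w"
  have hv: "\<forall>c\<in>set v. homl \<gamma> c" using less.prems by (simp add: v_def)
  have lv: "length v = length w" by (simp add: v_def)
  have sv: "sorted (map fst v)" by (simp add: v_def)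
  have key: "\<psi> (Pw \<iota> v) = \<psi> (Pw (\<lambda>k. \<iota> (\<sigma> k)) v)"
  proof (cases "distinct (map fst v)")
    case True
    define v2 where "v2 = map (\<lambda>c. (\<sigma> (fst c), snd c)) v"
    have d2: "distinct (map fst v2)"
    proof -
      have "map fst v2 = map \<sigma> (map fst v)" by (simp add: v2_def)
      then show ?thesis using True inj by (simp add: distinct_map inj_on_def)
    qed
    have h2: "\<forall>c\<in>set v2. homl \<gamma> c" using hv by (auto simp: v2_def homl_def)
    have "\<psi> (Pw \<iota> v) = prod_list (map (\<lambda>c. \<phi> (fst (snd c))) v)"
      by (rule L1[OF cc one op neg p1 podd True hv])
    also have "\<dots> = prod_list (map (\<lambda>c. \<phi> (fst (snd c))) v2)"
      by (simp add: v2_def o_def)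
    also have "\<dots> = \<psi> (Pw \<iota> v2)"
      by (rule L1[OF cc one op neg p1 podd d2 h2, symmetric])
    also have "\<dots> = \<psi> (Pw (\<lambda>k. \<iota> (\<sigma> k)) v)"
      by (simp add: v2_def Pw_map)
    finally show ?thesis .
  next
    case False
    obtain j where j: "Suc j < length v" "fst (v ! j) = fst (v ! Suc j)"
      using adj[OF sv False] by blast
    define a where "a = v ! j"
    define b where "b = v ! Suc j"
    define r where "r = drop (Suc (Suc j)) v"
    define m where "m = (fst a, fst (snd a) * fst (snd b), snd (snd a) \<noteq> snd (snd b))"
    define v' where "v' = take j v @ m # r"
    have vs: "v = take j v @ a # b # r"
    proof -
      have "b # r = drop (Suc j) v" using j(1) by (simp add: b_def r_def Cons_nth_drop_Suc)
      moreover have "a # drop (Suc j) v = drop j v" using j(1) by (simp add: a_def Cons_nth_drop_Suc)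
      ultimately show ?thesis by simp
    qed
    have ab: "fst a = fst b" using j(2) by (simp add: a_def b_def)
    have eqP: "\<And>h :: nat \<Rightarrow> 'a \<Rightarrow> 'u. (\<forall>k x y. h k (x * y) = h k x * h k y) \<Longrightarrow> Pw h v = Pw h v'"
    proof -
      fix h :: "nat \<Rightarrow> 'a \<Rightarrow> 'u"
      assume hm: "\<forall>k x y. h k (x * y) = h k x * h k y"
      have "Pw h (a # b # r) = Pw h (m # r)"
        using hm ab by (simp add: m_def mult.assoc)
      then show "Pw h v = Pw h v'"
        by (subst vs) (simp add: v'_def)
    qed
    have e1: "Pw \<iota> v = Pw \<iota> v'" using mult by (intro eqP) simp
    have e2: "Pw (\<lambda>k. \<iota> (\<sigma> k)) v = Pw (\<lambda>k. \<iota> (\<sigma> k)) v'" using mult by (intro eqP) simp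
    have len: "length v' < length w"
      using j(1) lv by (simp add: v'_def r_def)
    have ha: "homl \<gamma> a" and hb: "homl \<gamma> b"
      using hv j(1) by (auto simp: a_def b_def)
    have hm: "homl \<gamma> m"
      using ha hb gmul by (auto simp: homl_def m_def even_elt_def odd_elt_def split: if_splits)
    have hv': "\<forall>c\<in>set v'. homl \<gamma> c"
    proof
      fix c assume "c \<in> set v'"
      then have "c \<in> set (take j v) \<or> c = m \<or> c \<in> set r" by (auto simp: v'_def)
      then show "homl \<gamma> c" using hv hm by (auto simp: r_def dest: in_set_takeD in_set_dropD)
    qed
    show ?thesis using less.hyps[OF len hv'] e1 e2 by simp
  qed
  show ?case
  proof (cases "s = 1")
    case True
    then show ?thesis using s key v_def by simp
  next
    case False
    then have "s = -1" using s(1) by (auto simp: sgnok_def)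
    then show ?thesis using s key v_def neg by simp
  qed
qed


lemma ml:
  fixes \<kappa> :: "nat \<Rightarrow> 'a::ring_1 \<Rightarrow> 'u::ring_1"
  assumes add: "\<forall>j x y. \<kappa> j (x + y) = \<kappa> j x + \<kappa> j y" and mn: "m < n"
  shows "prod_list (map (\<lambda>j. \<kappa> j ((Y(m := x + y)) j)) [0..<n]) =
         prod_list (map (\<lambda>j. \<kappa> j ((Y(m := x)) j)) [0..<n]) + prod_list (map (\<lambda>j. \<kappa> j ((Y(m := y)) j)) [0..<n])"
proof -
  have split: "[0..<n] = [0..<m] @ m # [Suc m..<n]"
    using mn upt_add_eq_append[of 0 m "n - m"] upt_conv_Cons[of m n] by simp
  define A where "A = prod_list (map (\<lambda>j. \<kappa> j (Y j)) [0..<m])"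
  define B where "B = prod_list (map (\<lambda>j. \<kappa> j (Y j)) [Suc m..<n])"
  have gen: "\<And>z. prod_list (map (\<lambda>j. \<kappa> j ((Y(m := z)) j)) [0..<n]) = A * (\<kappa> m z * B)"
  proof -
    fix z
    have 1: "map (\<lambda>j. \<kappa> j ((Y(m := z)) j)) [0..<m] = map (\<lambda>j. \<kappa> j (Y j)) [0..<m]"
      by (rule map_cong) auto
    have 2: "map (\<lambda>j. \<kappa> j ((Y(m := z)) j)) [Suc m..<n] = map (\<lambda>j. \<kappa> j (Y j)) [Suc m..<n]"
      by (rule map_cong) auto
    show "prod_list (map (\<lambda>j. \<kappa> j ((Y(m := z)) j)) [0..<n]) = A * (\<kappa> m z * B)"
      unfolding split map_append list.map prod_list.append prod_list.Cons 1 2 A_def B_def by simp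
  qed
  show ?thesis unfolding gen by (simp add: add distrib_left distrib_right)
qed

lemma CCI:
  fixes f :: "nat \<Rightarrow> 'a::ab_group_add \<Rightarrow> 'u::ring_1"
  assumes c1: "\<forall>j k x y. j \<noteq> k \<longrightarrow> (even_elt \<gamma> x \<or> even_elt \<gamma> y) \<longrightarrow> f j x * f k y = f k y * f j x"
    and c2: "\<forall>j k x y. j \<noteq> k \<longrightarrow> odd_elt \<gamma> x \<longrightarrow> odd_elt \<gamma> y \<longrightarrow> f j x * f k y = - (f k y * f j x)"
  shows "CC \<gamma> f"
  unfolding CC_def
proof (intro allI impI)
  fix c d :: "nat \<times> 'a \<times> bool"
  assume ne: "fst c \<noteq> fst d" and hc: "homl \<gamma> c" and hd: "homl \<gamma> d"
  show "f (fst c) (fst (snd c)) * f (fst d) (fst (snd d)) =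
     (if snd (snd c) \<and> snd (snd d) then -1 else 1) * (f (fst d) (fst (snd d)) * f (fst c) (fst (snd c)))"
  proof (cases "snd (snd c) \<and> snd (snd d)")
    case True
    then have "odd_elt \<gamma> (fst (snd c))" "odd_elt \<gamma> (fst (snd d))" using hc hd by (auto simp: homl_def)
    then have "f (fst c) (fst (snd c)) * f (fst d) (fst (snd d)) = - (f (fst d) (fst (snd d)) * f (fst c) (fst (snd c)))"
      using c2 ne by blast
    moreover have "(if snd (snd c) \<and> snd (snd d) then -1 else (1::'u)) = -1" by (rule if_P[OF True])
    ultimately show ?thesis by (simp only: mult_minus1)
  next
    case False
    then have "even_elt \<gamma> (fst (snd c)) \<or> even_elt \<gamma> (fst (snd d))" using hc hd by (auto simp: homl_def)
    then have "f (fst c) (fst (snd c)) * f (fst d) (fst (snd d)) = f (fst d) (fst (snd d)) * f (fst c) (fst (snd c))"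
      using c1 ne by blast
    moreover have "(if snd (snd c) \<and> snd (snd d) then -1 else (1::'u)) = 1" by (rule if_not_P[OF False])
    ultimately show ?thesis by (simp only: mult_1_left)
  qed
qed

lemma decomp:
  fixes sa :: "complex \<Rightarrow> 'a::ab_group_add \<Rightarrow> 'a"
  assumes msa: "module sa" and lg: "module_hom sa sa \<gamma>" and gg: "\<forall>x. \<gamma> (\<gamma> x) = x"
  shows "\<exists>Ev Od. x = Ev + Od \<and> even_elt \<gamma> Ev \<and> odd_elt \<gamma> Od"
proof -
  define Ev where "Ev = sa (1/2) (x + \<gamma> x)"
  define Od where "Od = sa (1/2) (x - \<gamma> x)"
  have "Ev + Od = sa (1/2) ((x + \<gamma> x) + (x - \<gamma> x))"
    by (simp only: Ev_def Od_def module.scale_right_distrib[OF msa, symmetric])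
  also have "(x + \<gamma> x) + (x - \<gamma> x) = x + x" by (simp add: algebra_simps)
  also have "sa (1/2) (x + x) = sa (1/2 + 1/2) x"
    by (simp only: module.scale_right_distrib[OF msa] module.scale_left_distrib[OF msa])
  also have "\<dots> = x" using module.scale_one[OF msa] by simp
  finally have 1: "x = Ev + Od" by simp
  have 2: "even_elt \<gamma> Ev"
    by (simp add: even_elt_def Ev_def module_hom.scale[OF lg] module_hom.add[OF lg] gg add.commute)
  have "\<gamma> Od = sa (1/2) (\<gamma> x - x)"
    by (simp add: Od_def module_hom.scale[OF lg] module_hom.diff[OF lg] gg)
  also have "\<dots> = sa (1/2) (- (x - \<gamma> x))" by simp
  also have "\<dots> = - Od" by (simp only: Od_def module.scale_minus_right[OF msa])
  finally have 3: "odd_elt \<gamma> Od" by (simp add: odd_elt_def)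
  show ?thesis using 1 2 3 by blast
qed

theorem proposition4p21:
  fixes sa :: "complex \<Rightarrow> 'a::ring_1 \<Rightarrow> 'a" and \<gamma> :: "'a \<Rightarrow> 'a" and \<phi> :: "'a \<Rightarrow> complex"
    and su :: "complex \<Rightarrow> 'u::ring_1 \<Rightarrow> 'u" and \<gamma>u :: "'u \<Rightarrow> 'u" and \<psi> :: "'u \<Rightarrow> complex"
    and \<iota> :: "nat \<Rightarrow> 'a \<Rightarrow> 'u"
    and X :: "nat \<Rightarrow> 'a" and i :: "nat \<Rightarrow> nat" and n :: nat and \<sigma> :: "nat \<Rightarrow> nat"
  assumes "graded_ncps sa \<gamma> \<phi>"
    and "inf_graded_tensor_product sa \<gamma> \<phi> su \<gamma>u \<psi> \<iota>"
    and "bij \<sigma>"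
  shows "\<psi> (prod_list (map (\<lambda>j. \<iota> (i j) (X j)) [0..<n]))
       = \<psi> (prod_list (map (\<lambda>j. \<iota> (\<sigma> (i j)) (X j)) [0..<n]))"
proof -
  have g1: "cplx_algebra sa" and gr: "grading sa \<gamma>" and lphi0: "Vector_Spaces.linear sa (*) \<phi>"
    and p1: "\<phi> 1 = 1" and pg: "\<forall>x. \<phi> (\<gamma> x) = \<phi> x"
    using assms(1) unfolding graded_ncps_def by blast+
  have lpsi0: "Vector_Spaces.linear su (*) \<psi>"
    and ahom: "\<forall>k. alg_hom sa su (\<iota> k)"
    and comm: "\<forall>j k x y. j \<noteq> k \<longrightarrow> (even_elt \<gamma> x \<or> even_elt \<gamma> y) \<longrightarrow> \<iota> j x * \<iota> k y = \<iota> k y * \<iota> j x"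
    and anti: "\<forall>j k x y. j \<noteq> k \<longrightarrow> odd_elt \<gamma> x \<longrightarrow> odd_elt \<gamma> y \<longrightarrow> \<iota> j x * \<iota> k y = - (\<iota> k y * \<iota> j x)"
    and op: "\<forall>N x. \<psi> (ordered_prod \<iota> N x) = (\<Prod>k<N. \<phi> (x k))"
    using assms(2) unfolding inf_graded_tensor_product_def by blast+
  have msa: "module sa" using g1 by (simp add: cplx_algebra_def)
  have lg: "module_hom sa sa \<gamma>" using gr by (simp add: grading_def alg_hom_def module_hom_iff_linear)
  have gmul: "\<forall>x y. \<gamma> (x * y) = \<gamma> x * \<gamma> y" using gr by (simp add: grading_def alg_hom_def)
  have gg: "\<forall>x. \<gamma> (\<gamma> x) = x" using gr by (simp add: grading_def)
  have lphi: "module_hom sa (*) \<phi>" using lphi0 by (simp add: module_hom_iff_linear)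
  have lpsi: "module_hom su (*) \<psi>" using lpsi0 by (simp add: module_hom_iff_linear)
  have lio: "\<And>k. module_hom sa su (\<iota> k)" using ahom by (simp add: alg_hom_def module_hom_iff_linear)
  have one: "\<forall>k. \<iota> k 1 = 1" using ahom by (simp add: alg_hom_def)
  have mult: "\<forall>k x y. \<iota> k (x * y) = \<iota> k x * \<iota> k y" using ahom by (simp add: alg_hom_def)
  have addi: "\<forall>k x y. \<iota> k (x + y) = \<iota> k x + \<iota> k y" using module_hom.add[OF lio] by blast
  have neg: "\<forall>u. \<psi> (- u) = - \<psi> u" using module_hom.neg[OF lpsi] by blast
  have addpsi: "\<forall>u v. \<psi> (u + v) = \<psi> u + \<psi> v" using module_hom.add[OF lpsi] by blast
  have inj: "inj \<sigma>" using assms(3) by (simp add: bij_def)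
  have podd: "\<forall>x. odd_elt \<gamma> x \<longrightarrow> \<phi> x = 0"
  proof (intro allI impI)
    fix x assume "odd_elt \<gamma> x"
    then have "\<phi> x = \<phi> (- x)" using pg by (metis odd_elt_def)
    also have "\<dots> = - \<phi> x" by (rule module_hom.neg[OF lphi])
    finally show "\<phi> x = 0" by simp
  qed
  have cc: "CC \<gamma> \<iota>" by (rule CCI[OF comm anti])
  have cc2: "CC \<gamma> (\<lambda>k. \<iota> (\<sigma> k))"
  proof (rule CCI)
    show "\<forall>j k x y. j \<noteq> k \<longrightarrow> (even_elt \<gamma> x \<or> even_elt \<gamma> y) \<longrightarrow> \<iota> (\<sigma> j) x * \<iota> (\<sigma> k) y = \<iota> (\<sigma> k) y * \<iota> (\<sigma> j) x"
    proof (intro allI impI)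
      fix j k :: nat and x y :: 'a assume a: "j \<noteq> k" "even_elt \<gamma> x \<or> even_elt \<gamma> y"
      have "\<sigma> j \<noteq> \<sigma> k" using a(1) inj by (simp add: inj_eq)
      then show "\<iota> (\<sigma> j) x * \<iota> (\<sigma> k) y = \<iota> (\<sigma> k) y * \<iota> (\<sigma> j) x" using comm a(2) by blast
    qed
    show "\<forall>j k x y. j \<noteq> k \<longrightarrow> odd_elt \<gamma> x \<longrightarrow> odd_elt \<gamma> y \<longrightarrow> \<iota> (\<sigma> j) x * \<iota> (\<sigma> k) y = - (\<iota> (\<sigma> k) y * \<iota> (\<sigma> j) x)"
    proof (intro allI impI)
      fix j k :: nat and x y :: 'a assume a: "j \<noteq> k" "odd_elt \<gamma> x" "odd_elt \<gamma> y"
      have "\<sigma> j \<noteq> \<sigma> k" using a(1) inj by (simp add: inj_eq)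
      then show "\<iota> (\<sigma> j) x * \<iota> (\<sigma> k) y = - (\<iota> (\<sigma> k) y * \<iota> (\<sigma> j) x)" using anti a(2,3) by blast
    qed
  qed
  define F where "F = (\<lambda>Y. \<psi> (prod_list (map (\<lambda>j. \<iota> (i j) (Y j)) [0..<n])))"
  define G where "G = (\<lambda>Y. \<psi> (prod_list (map (\<lambda>j. \<iota> (\<sigma> (i j)) (Y j)) [0..<n])))"
  have base: "\<And>Y. (\<forall>j<n. even_elt \<gamma> (Y j) \<or> odd_elt \<gamma> (Y j)) \<Longrightarrow> F Y = G Y"
  proof -
    fix Y assume hY: "\<forall>j<n. even_elt \<gamma> (Y j) \<or> odd_elt \<gamma> (Y j)"
    define w where "w = map (\<lambda>j. (i j, Y j, \<not> even_elt \<gamma> (Y j))) [0..<n]"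
    have hw: "\<forall>c\<in>set w. homl \<gamma> c" using hY by (auto simp: w_def homl_def)
    have "\<psi> (Pw \<iota> w) = \<psi> (Pw (\<lambda>k. \<iota> (\<sigma> k)) w)"
      by (rule H[OF cc cc2 one op neg p1 podd inj mult gmul hw])
    then show "F Y = G Y" by (simp add: F_def G_def w_def Pw_def o_def)
  qed
  have addF: "\<And>Y m x y. m < n \<Longrightarrow> F (Y(m := x + y)) = F (Y(m := x)) + F (Y(m := y))"
  proof -
    fix Y m x y assume "m < n"
    from ml[of "\<lambda>j. \<iota> (i j)", OF _ this, of Y x y] addi addpsi show "F (Y(m := x + y)) = F (Y(m := x)) + F (Y(m := y))"
      by (simp add: F_def)
  qed
  have addG: "\<And>Y m x y. m < n \<Longrightarrow> G (Y(m := x + y)) = G (Y(m := x)) + G (Y(m := y))"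
  proof -
    fix Y m x y assume "m < n"
    from ml[of "\<lambda>j. \<iota> (\<sigma> (i j))", OF _ this, of Y x y] addi addpsi show "G (Y(m := x + y)) = G (Y(m := x)) + G (Y(m := y))"
      by (simp add: G_def)
  qed
  have step: "\<forall>Y. (\<forall>j<n. k \<le> j \<longrightarrow> even_elt \<gamma> (Y j) \<or> odd_elt \<gamma> (Y j)) \<longrightarrow> F Y = G Y" for k
  proof (induction k)
    case 0
    then show ?case using base by simp
  next
    case (Suc k)
    show ?case
    proof (intro allI impI)
      fix Y assume hY: "\<forall>j<n. Suc k \<le> j \<longrightarrow> even_elt \<gamma> (Y j) \<or> odd_elt \<gamma> (Y j)"
      show "F Y = G Y"
      proof (cases "k < n")
        case True
        obtain Ev Od where d: "Y k = Ev + Od" "even_elt \<gamma> Ev" "odd_elt \<gamma> Od"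
          using decomp[OF msa lg gg] by blast
        have hE: "\<forall>j<n. k \<le> j \<longrightarrow> even_elt \<gamma> ((Y(k := Ev)) j) \<or> odd_elt \<gamma> ((Y(k := Ev)) j)"
        proof (intro allI impI)
          fix j assume "j < n" "k \<le> j"
          then show "even_elt \<gamma> ((Y(k := Ev)) j) \<or> odd_elt \<gamma> ((Y(k := Ev)) j)"
            using hY d(2) by (cases "j = k") auto
        qed
        have hO: "\<forall>j<n. k \<le> j \<longrightarrow> even_elt \<gamma> ((Y(k := Od)) j) \<or> odd_elt \<gamma> ((Y(k := Od)) j)"
        proof (intro allI impI)
          fix j assume "j < n" "k \<le> j"
          then show "even_elt \<gamma> ((Y(k := Od)) j) \<or> odd_elt \<gamma> ((Y(k := Od)) j)"
            using hY d(3) by (cases "j = k") auto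
        qed
        have e1: "F (Y(k := Ev)) = G (Y(k := Ev))" using Suc.IH hE by blast
        have e2: "F (Y(k := Od)) = G (Y(k := Od))" using Suc.IH hO by blast
        have yy: "Y(k := Ev + Od) = Y" by (simp add: d(1)[symmetric])
        have "F Y = F (Y(k := Ev + Od))" by (simp only: yy)
        also have "\<dots> = G (Y(k := Ev + Od))" by (simp only: addF[OF True] addG[OF True] e1 e2)
        also have "\<dots> = G Y" by (simp only: yy)
        finally show ?thesis .
      next
        case False
        then show ?thesis using Suc.IH hY by auto
      qed
    qed
  qed
  have "F X = G X" using step[of n] by auto
  then show ?thesis by (simp add: F_def G_def)
qed

end
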